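(* Let $\mathscr X\subset\mathbb R^d$ be compact with $\mathrm{vol}(\mathscr X)>0$, and let $\|\cdot\|$ be any norm on $\mathbb R^d$. Let $\mathbf x_1,\mathbf x_2,\ldots$ be any sequence of pairwise distinct points of $\mathscr X$, and let $\mathbf X_n=\{\mathbf x_1,\ldots,\mathbf x_n\}$. Then $$\limsup_{n\to\infty}\mathsf{MR}(\mathbf X_n)\ge 2.$$ In particular, the uniformity constant satisfies $\mathsf{MR}(\mathbf X_\infty)\ge 2$ for every such sequence $\mathbf X_\infty=\{\mathbf x_1,\mathbf x_2,\ldots\}\subset\mathscr X$.
   Context: For a design (finite set of distinct points) $\mathbf X_n=\{\mathbf x_1,\ldots,\mathbf x_n\}\subset\mathscr X$: - the fill distance is $\mathsf{CR}(\mathbf X_n)=\mathsf{CR}_{\mathscr X}(\mathbf X_n)=\sup_{\mathbf x\in\mathscr X}\min_{\mathbf x_i\in\mathbf X_n}\|\mathbf x-\mathbf x_i\|$; - the separation radius is $\mathsf{SR}(\mathbf X_n)=\tfrac12\min_{\mathbf x_i\neq\mathbf x_j\in\mathbf X_n}\|\mathbf x_i-\mathbf x_j\|$ for $n\ge2$; - the mesh-ratio is $\mathsf{MR}(\mathbf X_n)=\mathsf{CR}(\mathbf X_n)/\mathsf{SR}(\mathbf X_n)$ for $n\ge 2$. The uniformity constant of the sequence $\mathbf X_\infty$ (equivalently of the nested designs $\{\mathbf X_n\}$) is $\mathsf{MR}(\mathbf X_\infty)=\sup_{n\ge2}\mathsf{MR}(\mathbf X_n)$ (possibly $+\infty$).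 *)

theory Defs
  imports "HOL-Analysis.Analysis"
begin

text \<open>An arbitrary norm on a real vector space (not necessarily the type-class norm).\<close>
definition is_norm :: "('a::real_vector \<Rightarrow> real) \<Rightarrow> bool" where
  "is_norm N \<longleftrightarrow>
     (\<forall>x. 0 \<le> N x) \<and> (\<forall>x. N x = 0 \<longleftrightarrow> x = 0) \<and>
     (\<forall>c x. N (c *\<^sub>R x) = \<bar>c\<bar> * N x) \<and>
     (\<forall>x y. N (x + y) \<le> N x + N y)"

definition fill_dist :: "('a::real_vector \<Rightarrow> real) \<Rightarrow> 'a set \<Rightarrow> 'a set \<Rightarrow> real" where
  "fill_dist N X P = (SUP x\<in>X. Min ((\<lambda>p. N (x - p)) ` P))"

definition sep_radius :: "('a::real_vector \<Rightarrow> real) \<Rightarrow> 'a set \<Rightarrow> real" where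
  "sep_radius N P = Min {N (p - q) | p q. p \<in> P \<and> q \<in> P \<and> p \<noteq> q} / 2"

definition mesh_ratio :: "('a::real_vector \<Rightarrow> real) \<Rightarrow> 'a set \<Rightarrow> 'a set \<Rightarrow> real" where
  "mesh_ratio N X P = fill_dist N X P / sep_radius N P"

end

theory Submission
  imports Defs
begin

lemma norm_sum_le:
  assumes "is_norm N" "finite I"
  shows "N (sum f I) \<le> (\<Sum>i\<in>I. N (f i))"
  using assms(2)
proof (induction I rule: finite_induct)
  case empty
  then show ?case using assms(1) unfolding is_norm_def by (metis order_refl sum.empty)
next
  case (insert a F)
  then show ?case using assms(1) unfolding is_norm_def
    by (smt (verit, best) sum.insert)
qed

lemma norm_upper:
  fixes N :: "real ^ 'd \<Rightarrow> real"
  assumes "is_norm N"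
  shows "\<exists>C\<ge>0. \<forall>z. N z \<le> C * norm z"
proof -
  define C where "C = (\<Sum>i\<in>UNIV. N (axis i (1::real)))"
  have Cnn: "C \<ge> 0" unfolding C_def using assms by (simp add: is_norm_def sum_nonneg)
  have "N z \<le> C * norm z" for z
  proof -
    have rep: "z = (\<Sum>i\<in>UNIV. (z$i) *\<^sub>R axis i (1::real))"
      by (simp add: vec_eq_iff axis_def if_distrib[of "\<lambda>t. _ * t"] cong: if_cong)
    have "N z \<le> (\<Sum>i\<in>UNIV. N ((z$i) *\<^sub>R axis i (1::real)))"
      by (subst rep) (rule norm_sum_le[OF assms], simp)
    also have "\<dots> = (\<Sum>i\<in>UNIV. \<bar>z$i\<bar> * N (axis i (1::real)))"
      using assms by (simp add: is_norm_def)
    also have "\<dots> \<le> (\<Sum>i\<in>UNIV. norm z * N (axis i (1::real)))"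
      apply (rule sum_mono) apply (rule mult_right_mono)
      using component_le_norm_cart[of z] assms by (auto simp: is_norm_def)
    also have "\<dots> = C * norm z" by (simp add: C_def sum_distrib_left mult.commute)
    finally show ?thesis .
  qed
  then show ?thesis using Cnn by blast
qed

lemma norm_lower:
  fixes N :: "real ^ 'd \<Rightarrow> real"
  assumes "is_norm N"
  shows "\<exists>m>0. \<forall>z. m * norm z \<le> N z"
proof -
  obtain C where C: "C \<ge> 0" "\<And>z. N z \<le> C * norm z" using norm_upper[OF assms] by blast
  have "C-lipschitz_on (sphere 0 1) N"
  proof (rule lipschitz_onI)
    fix a b :: "real ^ 'd"
    have "N a \<le> N b + N (a - b)" "N b \<le> N a + N (b - a)"
      using assms unfolding is_norm_def by (metis add.commute diff_add_cancel)+
    moreover have "N (b - a) = N (a - b)" using assms unfolding is_norm_def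
      by (metis abs_minus_cancel abs_one minus_diff_eq mult_1 scaleR_minus1_left)
    ultimately show "dist (N a) (N b) \<le> C * dist a b"
      using C(2)[of "a - b"] by (simp add: dist_norm)
  qed (fact C)
  then have cont: "continuous_on (sphere 0 1) N" by (rule lipschitz_on_continuous_on)
  have ne: "sphere (0::real ^ 'd) 1 \<noteq> {}"
    by (metis ex_in_conv less_numeral_extra(1) sphere_eq_empty zero_less_one_class.zero_le_one not_le)
  obtain z0 where z0: "z0 \<in> sphere 0 1" "\<And>y. y \<in> sphere 0 1 \<Longrightarrow> N z0 \<le> N y"
    using continuous_attains_inf[OF compact_sphere ne cont] by blast
  have m: "N z0 > 0" using z0(1) assms unfolding is_norm_def
    by (metis norm_zero one_neq_zero order_le_less mem_sphere_0)
  have "N z0 * norm z \<le> N z" for z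
  proof (cases "z = 0")
    case True then show ?thesis using assms by (simp add: is_norm_def)
  next
    case False
    have "N z0 \<le> N ((1 / norm z) *\<^sub>R z)" using z0(2) False by simp
    also have "\<dots> = N z / norm z" using assms by (simp add: is_norm_def)
    finally show ?thesis using False by (simp add: field_simps)
  qed
  then show ?thesis using m by blast
qed

theorem theorem1:
  fixes X :: "(real ^ 'd) set" and N :: "real ^ 'd \<Rightarrow> real" and x :: "nat \<Rightarrow> real ^ 'd"
  assumes "compact X" and "emeasure lborel X > 0"
    and "is_norm N"
    and "inj x" and "range x \<subseteq> X"
  shows "limsup (\<lambda>n. ereal (mesh_ratio N X (x ` {..<n}))) \<ge> 2
       \<and> (SUP n\<in>{2..}. ereal (mesh_ratio N X (x ` {..<n}))) \<ge> 2"
proof -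
  note nrm = assms(3)[unfolded is_norm_def]
  obtain C where C: "C \<ge> 0" "\<And>z. N z \<le> C * norm z" using norm_upper[OF assms(3)] by blast
  obtain m where m: "m > 0" "\<And>z. m * norm z \<le> N z" using norm_lower[OF assms(3)] by blast
  define P where "P n = x ` {..<n}" for n
  define dm where "dm y n = Min ((\<lambda>p. N (y - p)) ` P n)" for y n
  define h where "h n = fill_dist N X (P n)" for n
  define s where "s n = sep_radius N (P n)" for n
  have finP: "finite (P n)" for n unfolding P_def by simp
  have neP: "n \<ge> 1 \<Longrightarrow> P n \<noteq> {}" for n unfolding P_def by (auto simp: lessThan_empty_iff)
  have xX: "x i \<in> X" for i using assms(5) by auto
  have dm_le: "n \<ge> 1 \<Longrightarrow> p \<in> P n \<Longrightarrow> dm y n \<le> N (y - p)" for n y p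
    unfolding dm_def by (simp add: finP)
  have dm_ex: "n \<ge> 1 \<Longrightarrow> \<exists>p\<in>P n. dm y n = N (y - p)" for n y
  proof -
    assume n: "n \<ge> 1"
    have "dm y n \<in> (\<lambda>p. N (y - p)) ` P n"
      unfolding dm_def using finP neP[OF n] by (intro Min_in) auto
    then show ?thesis by auto
  qed
  have dm_nn: "n \<ge> 1 \<Longrightarrow> dm y n \<ge> 0" for n y using dm_ex nrm by metis
  obtain B where B: "\<And>y. y \<in> X \<Longrightarrow> norm y \<le> B"
    using compact_imp_bounded[OF assms(1)] bounded_iff by blast
  have bdd: "n \<ge> 1 \<Longrightarrow> bdd_above ((\<lambda>y. dm y n) ` X)" for n
  proof -
    assume n: "n \<ge> 1"
    have x0: "x 0 \<in> P n" unfolding P_def using n by auto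
    show ?thesis
    proof (rule bdd_aboveI2)
      fix y assume y: "y \<in> X"
      have "dm y n \<le> N (y - x 0)" by (rule dm_le[OF n x0])
      also have "\<dots> \<le> C * norm (y - x 0)" by (rule C(2))
      also have "\<dots> \<le> C * (B + norm (x 0))"
        using B[OF y] norm_triangle_ineq4[of y "x 0"] C(1) by (intro mult_left_mono) auto
      finally show "dm y n \<le> C * (B + norm (x 0))" .
    qed
  qed
  have hdef: "h n = (SUP y\<in>X. dm y n)" for n unfolding h_def fill_dist_def dm_def ..
  have dm_h: "n \<ge> 1 \<Longrightarrow> y \<in> X \<Longrightarrow> dm y n \<le> h n" for n y
    unfolding hdef by (rule cSUP_upper[OF _ bdd])
  have h_nn: "n \<ge> 1 \<Longrightarrow> h n \<ge> 0" for n using dm_h[OF _ xX[of 0]] dm_nn by (meson order_trans)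
  have sep: "n \<ge> 1 \<Longrightarrow> 0 < s (Suc n) \<and> s (Suc n) \<le> h n / 2" for n
  proof -
    assume n: "n \<ge> 1"
    define S where "S = {N (p - q) | p q. p \<in> P (Suc n) \<and> q \<in> P (Suc n) \<and> p \<noteq> q}"
    have finS: "finite S"
    proof -
      have "S \<subseteq> (\<lambda>(p, q). N (p - q)) ` (P (Suc n) \<times> P (Suc n))" unfolding S_def by auto
      then show ?thesis using finite_subset finP by blast
    qed
    obtain p where p: "p \<in> P n" "dm (x n) n = N (x n - p)" using dm_ex[OF n] by blast
    have pne: "p \<noteq> x n" using p(1) assms(4) unfolding P_def by (auto dest: injD)
    have "x n \<in> P (Suc n)" "p \<in> P (Suc n)" using p(1) unfolding P_def by auto
    then have inS: "N (x n - p) \<in> S" unfolding S_def using pne by blast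
    have "Min S \<le> N (x n - p)" using finS inS by simp
    also have "\<dots> \<le> h n" using p(2) dm_h[OF n xX[of n]] by simp
    finally have 1: "Min S \<le> h n" .
    have "Min S \<in> S" using finS inS Min_in by blast
    then have 2: "Min S > 0" unfolding S_def using nrm
      by (smt (verit, best) eq_iff_diff_eq_0 mem_Collect_eq)
    have "s (Suc n) = Min S / 2" unfolding s_def sep_radius_def S_def ..
    then show ?thesis using 1 2 by simp
  qed
  have mr: "mesh_ratio N X (x ` {..<n}) = h n / s n" for n
    unfolding mesh_ratio_def h_def s_def P_def ..
  have part1: "limsup (\<lambda>n. ereal (mesh_ratio N X (x ` {..<n}))) \<ge> 2"
  proof (rule ccontr)
    assume "\<not> ?thesis"
    then have lt: "limsup (\<lambda>n. ereal (mesh_ratio N X (x ` {..<n}))) < 2" by simp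
    obtain L where L: "max (limsup (\<lambda>n. ereal (mesh_ratio N X (x ` {..<n})))) 1 < L" "L < 2"
      using dense[of "max (limsup (\<lambda>n. ereal (mesh_ratio N X (x ` {..<n})))) 1" 2] lt by auto
    then obtain r where r: "L = ereal r" using ereal_less_eq(1)
      by (cases L) auto
    have r12: "1 < r" "r < 2" using L r by auto
    have "eventually (\<lambda>n. ereal (mesh_ratio N X (x ` {..<n})) < L) sequentially"
      by (rule Limsup_lessD) (use L in auto)
    then obtain K where K: "\<And>n. n \<ge> K \<Longrightarrow> h n / s n < r"
      unfolding eventually_sequentially mr r by auto
    define K' where "K' = Suc K"
    define \<rho> where "\<rho> = r / 2"
    have rho: "0 < \<rho>" "\<rho> < 1" using r12 unfolding \<rho>_def by auto
    have hstep: "n \<ge> K' \<Longrightarrow> h (Suc n) \<le> \<rho> * h n" for n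
    proof -
      assume n: "n \<ge> K'"
      then have n1: "n \<ge> 1" unfolding K'_def by simp
      have "h (Suc n) / s (Suc n) < r" using K n unfolding K'_def by simp
      then have "h (Suc n) < r * s (Suc n)" using sep[OF n1] by (simp add: divide_less_eq)
      also have "\<dots> \<le> r * (h n / 2)" using sep[OF n1] r12 by (intro mult_left_mono) auto
      finally show ?thesis unfolding \<rho>_def by simp
    qed
    have geo: "n \<ge> K' \<Longrightarrow> h n \<le> h K' * \<rho> ^ (n - K')" for n
    proof (induction n rule: dec_induct)
      case base then show ?case by simp
    next
      case (step n)
      have "h (Suc n) \<le> \<rho> * h n" using step.hyps(1) by (rule hstep)
      also have "\<dots> \<le> \<rho> * (h K' * \<rho> ^ (n - K'))" using step.IH rho by (intro mult_left_mono) auto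
      also have "\<dots> = h K' * \<rho> ^ (Suc n - K')" using step.hyps by (simp add: Suc_diff_le)
      finally show ?case .
    qed
    define D where "D = CARD('d)"
    define U where "U = unit_ball_vol (real D)"
    have finX: "emeasure lborel X \<noteq> \<infinity>"
      using emeasure_bounded_finite[OF compact_imp_bounded[OF assms(1)]] by simp
    define v where "v = measure lborel X"
    have Xv: "emeasure lborel X = ennreal v" unfolding v_def using finX by (metis emeasure_eq_ennreal_measure infinity_ennreal_def)
    have vpos: "v > 0" using assms(2) Xv by (simp add: ennreal_less_zero_iff)
    have cover: "n \<ge> 1 \<Longrightarrow> X \<subseteq> (\<Union>i<n. cball (x i) (h n / m))" for n
    proof
      fix y assume n: "n \<ge> 1" and y: "y \<in> X"
      obtain p where p: "p \<in> P n" "dm y n = N (y - p)" using dm_ex[OF n] by blast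
      have "m * norm (y - p) \<le> h n" using m(2)[of "y - p"] p(2) dm_h[OF n y] by simp
      then have "dist p y \<le> h n / m" using m(1) by (simp add: dist_norm field_simps norm_minus_commute)
      then show "y \<in> (\<Union>i<n. cball (x i) (h n / m))" using p(1) unfolding P_def by auto
    qed
    have vbound: "n \<ge> 1 \<Longrightarrow> v \<le> real n * (U * (h n / m) ^ D)" for n
    proof -
      assume n: "n \<ge> 1"
      have "ennreal v \<le> emeasure lborel (\<Union>i<n. cball (x i) (h n / m))"
        unfolding Xv[symmetric] by (rule emeasure_mono[OF cover[OF n]]) auto
      also have "\<dots> \<le> (\<Sum>i<n. emeasure lborel (cball (x i) (h n / m)))"
        by (rule emeasure_subadditive_finite) auto
      also have "\<dots> = (\<Sum>i<n. ennreal (U * (h n / m) ^ D))"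
        using h_nn[OF n] m(1) by (simp add: emeasure_cball U_def D_def)
      also have "\<dots> = ennreal (real n * (U * (h n / m) ^ D))"
        by (simp add: ennreal_of_nat_eq_real_of_nat ennreal_mult' U_def)
      finally show ?thesis
        using h_nn[OF n] m(1) by (subst (asm) ennreal_le_iff) (auto simp: U_def)
    qed
    define q where "q = \<rho> ^ D"
    have q: "0 < q" "q < 1" unfolding q_def D_def using rho by (auto simp: power_less_one_iff)
    define A where "A = U * (h K' / (m * \<rho> ^ K')) ^ D"
    have bnd: "n \<ge> K' \<Longrightarrow> v \<le> A * (real n * q ^ n)" for n
    proof -
      assume n: "n \<ge> K'"
      then have n1: "n \<ge> 1" unfolding K'_def by simp
      have "h n / m \<le> h K' * \<rho> ^ (n - K') / m" using geo[OF n] m(1) by (simp add: divide_right_mono)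
      also have "\<dots> = h K' / (m * \<rho> ^ K') * \<rho> ^ n" using n rho(1)
        by (simp add: power_diff field_simps)
      finally have "(h n / m) ^ D \<le> (h K' / (m * \<rho> ^ K') * \<rho> ^ n) ^ D"
        using h_nn[OF n1] m(1) by (intro power_mono) auto
      also have "\<dots> = (h K' / (m * \<rho> ^ K')) ^ D * q ^ n"
        unfolding q_def power_mult_distrib power_mult[symmetric] by (simp only: mult.commute[of n D])
      finally have "U * (h n / m) ^ D \<le> U * ((h K' / (m * \<rho> ^ K')) ^ D * q ^ n)"
        by (intro mult_left_mono) (auto simp: U_def)
      then have "real n * (U * (h n / m) ^ D) \<le> real n * (U * ((h K' / (m * \<rho> ^ K')) ^ D * q ^ n))"
        by (rule mult_left_mono) auto
      then show ?thesis using vbound[OF n1] unfolding A_def by (simp add: algebra_simps)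
    qed
    have "(\<lambda>n. A * (real n * q ^ n)) \<longlonglongrightarrow> A * 0"
      by (intro tendsto_mult tendsto_const powser_times_n_limit_0) (use q in simp)
    then have "eventually (\<lambda>n. A * (real n * q ^ n) < v) sequentially"
      using vpos by (simp add: order_tendstoD(2))
    then obtain K2 where K2: "\<And>n. n \<ge> K2 \<Longrightarrow> A * (real n * q ^ n) < v"
      unfolding eventually_sequentially by blast
    have "A * (real (max K2 K') * q ^ (max K2 K')) < v" by (rule K2) simp
    moreover have "v \<le> A * (real (max K2 K') * q ^ (max K2 K'))" by (rule bnd) simp
    ultimately show False by simp
  qed
  have "limsup (\<lambda>n. ereal (mesh_ratio N X (x ` {..<n}))) \<le> (SUP n\<in>{2..}. ereal (mesh_ratio N X (x ` {..<n})))"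
    unfolding limsup_INF_SUP by (rule INF_lower) simp
  then show ?thesis using part1 by simp
qed

end
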